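(* Let $\underline{t}$ be an increment array of size $s$ for $n$ agents, let $y\in\{1,\ldots,n\}$, and write $C=C(y,\underline{t})=\{x_1,x_2,\ldots,x_s\}$ with $x_1<x_2<\cdots<x_s$. Then there is an increment array $\underline{u}=\langle u_0,\ldots,u_{s-1}\rangle$ with $\underline{t}\approx\underline{u}$ such that $C(x_1,\underline{u})=C$ and $C(x_1,\underline{u})$ generates the elements of $C$ in strictly increasing order, i.e. \[x_i\in\Big\{x_1+\sum_{k=0}^{i-2}u_k+i-1,\; x_1+\sum_{k=0}^{i-2}u_k+i-1-n\Big\}\quad\text{for all }2\le i\le s.\]
   Context: Agent identifiers are $\{1,\ldots,n\}$, arithmetic on identifiers is modulo $n$ with representatives in $\{1,\ldots,n\}$ (a value $0$ is replaced by $n$). An increment array (IA) of size $s$ ($1\le s\le n$) for $n$ agents is a tuple $\underline{t}=\langle t_0,\ldots,t_{s-1}\rangle$ of non-negative integers with $\sum t_i=n-s$. Cumulative increments: $\varphi_1=0$, $\varphi_i=\sum_{k=0}^{i-2}(t_k+1)$ for $2\le i\le s+1$. The coalition generated from $x$ is $C(x,\underline{t})=\{x\}\cup\bigcup_{i=2}^{s}\{(x+\varphi_i)\bmod n\}$ (residues in $\{1,\ldots,n\}$). Two IAs of the same size are equivalent, $\underline{t}\approx\underline{u}$, if $\underline{u}$ is a circular shift of $\underline{t}$: there is $0\le k\le s-1$ with $\langle u_0,\ldots,u_{s-1}\rangle=\langle t_k,\ldots,t_{s-1},t_0,\ldots,t_{k-1}\rangle$. *)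

theory Defs
  imports Main
begin

definition modn :: "nat \<Rightarrow> nat \<Rightarrow> nat" where
  "modn n a = (if a mod n = 0 then n else a mod n)"

definition is_IA :: "nat \<Rightarrow> nat \<Rightarrow> nat list \<Rightarrow> bool" where
  "is_IA n s t \<longleftrightarrow> 1 \<le> s \<and> s \<le> n \<and> length t = s \<and> sum_list t = n - s"

definition phi :: "nat list \<Rightarrow> nat \<Rightarrow> nat" where
  "phi t i = (\<Sum>k<i - 1. t ! k + 1)"

definition coal :: "nat \<Rightarrow> nat \<Rightarrow> nat list \<Rightarrow> nat set" where
  "coal n x t = {x} \<union> (\<lambda>i. modn n (x + phi t i)) ` {2..length t}"

definition ia_equiv :: "nat list \<Rightarrow> nat list \<Rightarrow> bool" where
  "ia_equiv t u \<longleftrightarrow> length u = length t \<and> (\<exists>k. k \<le> length t - 1 \<and> u = drop k t @ take k t)"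

end

theory Submission
  imports Defs
begin

definition S :: "nat list \<Rightarrow> nat \<Rightarrow> nat" where
  "S t m = (\<Sum>j<m. t ! j + 1)"

lemma S_0[simp]: "S t 0 = 0" by (simp add: S_def)

lemma S_Suc: "S t (Suc m) = S t m + t ! m + 1" by (simp add: S_def)

lemma S_total: "S t (length t) = sum_list t + length t"
  unfolding S_def sum.distrib by (simp add: sum_list_sum_nth atLeast0LessThan)

lemma S_strict: "m < m' \<Longrightarrow> S t m < S t m'"
proof (induction m')
  case 0 then show ?case by simp
next
  case (Suc m') then show ?case by (auto simp: S_Suc less_Suc_eq)
qed

lemma S_mono: "m \<le> m' \<Longrightarrow> S t m \<le> S t m'"
  using S_strict by (metis le_eq_less_or_eq order.strict_implies_order)

lemma phi_S: "phi t i = S t (i - 1)" by (simp add: phi_def S_def)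

lemma S_rot:
  assumes "k < length t" "m \<le> length t"
  shows "S (rotate k t) m + S t k =
    (if k + m \<le> length t then S t (k + m) else S t (length t) + S t (k + m - length t))"
  using assms(2)
proof (induction m)
  case 0 then show ?case using assms by simp
next
  case (Suc m)
  let ?s = "length t"
  have ml: "m < ?s" using Suc.prems by simp
  have r: "rotate k t ! m = t ! ((m + k) mod ?s)" using nth_rotate[OF ml, of k] by (simp add: add.commute)
  have IH: "S (rotate k t) m + S t k =
    (if k + m \<le> ?s then S t (k + m) else S t ?s + S t (k + m - ?s))" using Suc ml by simp
  consider "k + m + 1 \<le> ?s" | "k + m = ?s" | "k + m > ?s" by linarith
  then show ?case
  proof cases
    case 1
    then have "(m + k) mod ?s = k + m" by simp
    then show ?thesis using IH 1 r by (simp add: S_Suc algebra_simps)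
  next
    case 2
    then have "(m + k) mod ?s = 0" by (simp add: add.commute)
    then show ?thesis using IH 2 r by (simp add: S_Suc)
  next
    case 3
    then have "(m + k) mod ?s = k + m - ?s" using ml assms(1)
      by (simp add: le_mod_geq add.commute)
    moreover have "k + Suc m - ?s = Suc (k + m - ?s)" using 3 by simp
    ultimately show ?thesis using IH 3 r by (simp add: S_Suc)
  qed
qed

lemma ifeq: "A < n \<Longrightarrow> B < (n::nat) \<Longrightarrow> ((if A = 0 then n else A) = (if B = 0 then n else B)) = (A = B)"
  by auto

lemma modn_eq: "0 < n \<Longrightarrow> modn n a = modn n b \<longleftrightarrow> a mod n = b mod n"
proof -
  assume n0: "0 < n"
  have "a mod n < n" "b mod n < n" using n0 by auto
  then show ?thesis unfolding modn_def
    using ifeq by blast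
qed

lemma modn_range: "0 < n \<Longrightarrow> 1 \<le> modn n a \<and> modn n a \<le> n"
  unfolding modn_def by (auto simp: less_imp_le)

lemma modn_id: "1 \<le> a \<Longrightarrow> a \<le> n \<Longrightarrow> modn n a = a"
  unfolding modn_def by (cases "a = n") auto

lemma modn_big: "n < a \<Longrightarrow> a < 2 * n \<Longrightarrow> modn n a = a - n"
proof -
  assume h: "n < a" "a < 2 * n"
  have "a mod n = (a - n) mod n" using h by (simp add: le_mod_geq)
  also have "\<dots> = a - n" using h by simp
  finally show ?thesis unfolding modn_def using h by simp
qed

lemma coal_alt:
  assumes "x \<in> {1..n}" "1 \<le> length t"
  shows "coal n x t = (\<lambda>m. modn n (x + S t m)) ` {..<length t}"
proof -
  have x: "modn n x = x" using assms modn_id by auto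
  have "{..<length t} = insert 0 ((\<lambda>i. i - 1) ` {2..length t})"
  proof (rule set_eqI)
    fix m show "m \<in> {..<length t} \<longleftrightarrow> m \<in> insert 0 ((\<lambda>i. i - 1) ` {2..length t})"
    proof
      assume "m \<in> {..<length t}"
      then show "m \<in> insert 0 ((\<lambda>i. i - 1) ` {2..length t})"
        by (cases m) (auto intro!: image_eqI[where x="m+1"])
    next
      assume "m \<in> insert 0 ((\<lambda>i. i - 1) ` {2..length t})"
      then show "m \<in> {..<length t}" using assms by auto
    qed
  qed
  then have "(\<lambda>m. modn n (x + S t m)) ` {..<length t} =
      insert x ((\<lambda>m. modn n (x + S t m)) ` ((\<lambda>i. i - 1) ` {2..length t}))"
    using x by simp
  also have "\<dots> = coal n x t"
    unfolding coal_def phi_S image_image by simp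
  finally show ?thesis by simp
qed

lemma sorted_img:
  assumes "\<And>a b. a < b \<Longrightarrow> b < s \<Longrightarrow> f a < (f b :: nat)"
  shows "sorted_list_of_set (f ` {..<s}) = map f [0..<s]"
proof -
  have "sorted_wrt (<) (map f [0..<s])"
    unfolding sorted_wrt_iff_nth_less using assms by auto
  then have "sorted (map f [0..<s])" "distinct (map f [0..<s])"
    using strict_sorted_iff by blast+
  moreover have "f ` {..<s} = set (map f [0..<s])" by auto
  ultimately show ?thesis
    using sorted_list_of_set.idem_if_sorted_distinct by metis
qed

theorem lemma4:
  fixes n s y :: nat and t :: "nat list"
  assumes "is_IA n s t" and "y \<in> {1..n}"
  defines "xs \<equiv> sorted_list_of_set (coal n y t)"
  shows "\<exists>u. is_IA n s u \<and> ia_equiv t u \<and> coal n (xs ! 0) u = coal n y t \<and>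
           (\<forall>i\<in>{2..s}. int (xs ! (i - 1)) \<in>
              {int (xs ! 0) + (\<Sum>k<i - 1. int (u ! k)) + int i - 1,
               int (xs ! 0) + (\<Sum>k<i - 1. int (u ! k)) + int i - 1 - int n})"
proof -
  have s1: "1 \<le> s" and sn: "s \<le> n" and lt: "length t = s" and st: "sum_list t = n - s"
    using assms(1) unfolding is_IA_def by auto
  have n0: "0 < n" using s1 sn by simp
  have Stn: "S t s = n" using S_total[of t] lt st sn by simp
  define C where "C = coal n y t"
  have C: "C = (\<lambda>m. modn n (y + S t m)) ` {..<s}"
    unfolding C_def using coal_alt[OF assms(2)] s1 lt by simp
  have "0 \<in> {..<s}" using s1 by simp
  then have fC: "finite C" "C \<noteq> {}" unfolding C by blast+
  define x1 where "x1 = Min C"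
  have "x1 \<in> C" using fC x1_def by simp
  then obtain k where k: "k < s" "x1 = modn n (y + S t k)" using C by auto
  have x1r: "x1 \<in> {1..n}" using k modn_range[OF n0] by auto
  define u where "u = rotate k t"
  have lu: "length u = s" using u_def lt by simp
  have udt: "u = drop k t @ take k t" using u_def rotate_drop_take[of k t] k lt by simp
  have su: "sum_list u = n - s"
    using udt st by (metis append_take_drop_id sum_list_append add.commute)
  have Sun: "S u s = n" using S_total[of u] lu su sn by simp
  have x1mod: "x1 mod n = (y + S t k) mod n"
    using k modn_eq[OF n0] modn_id x1r by (metis atLeastAtMost_iff)
  have key: "modn n (x1 + S u m) = modn n (y + S t ((k + m) mod s))" if "m < s" for m
  proof -
    have R: "S u m + S t k = (if k + m \<le> s then S t (k + m) else n + S t (k + m - s))"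
      using S_rot[of k t m] k that lt Stn u_def by simp
    have "(x1 + S u m) mod n = (y + S t k + S u m) mod n"
      using x1mod by (metis mod_add_left_eq)
    also have "\<dots> = (y + S t ((k + m) mod s)) mod n"
    proof (cases "k + m < s")
      case True
      then have eq: "y + S t k + S u m = y + S t (k + m)" using R by simp
      have "(k + m) mod s = k + m" using True by simp
      then show ?thesis by (simp only: eq)
    next
      case False
      then have km: "k + m \<ge> s" by simp
      have "(k + m) mod s = k + m - s" using km k that by (simp add: le_mod_geq)
      moreover have "y + S t k + S u m = y + n + S t (k + m - s)"
      proof (cases "k + m = s")
        case True then show ?thesis using R Stn by simp
      next
        case False then show ?thesis using R km by simp
      qed
      moreover have "y + n + S t (k + m - s) = (y + S t (k + m - s)) + n" by simp
      ultimately show ?thesis by (simp only: mod_add_self2)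
    qed
    finally show ?thesis using modn_eq[OF n0] by simp
  qed
  have perm: "(\<lambda>m. (k + m) mod s) ` {..<s} = {..<s}"
  proof
    show "(\<lambda>m. (k + m) mod s) ` {..<s} \<subseteq> {..<s}" using s1 by auto
  next
    show "{..<s} \<subseteq> (\<lambda>m. (k + m) mod s) ` {..<s}"
    proof
      fix j assume j: "j \<in> {..<s}"
      have "(k + (j + s - k) mod s) mod s = (k + (j + s - k)) mod s" by (simp add: mod_add_right_eq)
      also have "\<dots> = j" using j k by simp
      finally show "j \<in> (\<lambda>m. (k + m) mod s) ` {..<s}"
        using s1 by (intro image_eqI[where x="(j + s - k) mod s"]) auto
    qed
  qed
  have cu: "coal n x1 u = (\<lambda>m. modn n (x1 + S u m)) ` {..<s}"
    using coal_alt[OF x1r] lu s1 by simp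
  also have "\<dots> = (\<lambda>m. modn n (y + S t ((k + m) mod s))) ` {..<s}"
    using key by simp
  also have "\<dots> = (\<lambda>j. modn n (y + S t j)) ` ((\<lambda>m. (k + m) mod s) ` {..<s})"
    by (simp add: image_image)
  also have "\<dots> = C" using perm C by simp
  finally have cuC: "coal n x1 u = C" .
  have bound: "x1 + S u m \<le> n" if "m < s" for m
  proof (rule ccontr)
    assume "\<not> ?thesis"
    then have gt: "n < x1 + S u m" by simp
    have "S u m < n" using S_strict[OF that, of u] Sun by simp
    then have lt2: "x1 + S u m < 2 * n" using x1r by simp
    have "modn n (x1 + S u m) = x1 + S u m - n" using modn_big[OF gt lt2] .
    moreover have "modn n (x1 + S u m) \<in> C" using cu cuC that by auto
    ultimately have "x1 \<le> x1 + S u m - n" using fC x1_def by simp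
    then show False using \<open>S u m < n\<close> gt by simp
  qed
  have C2: "C = (\<lambda>m. x1 + S u m) ` {..<s}"
    using cu cuC bound modn_id x1r by auto
  have xs: "xs = map (\<lambda>m. x1 + S u m) [0..<s]"
    unfolding xs_def C_def[symmetric] C2
    by (rule sorted_img) (simp add: S_strict)
  have xs0: "xs ! 0 = x1" using xs s1 by simp
  show ?thesis
  proof (intro exI[of _ u] conjI ballI)
    show "is_IA n s u" using s1 sn lu su by (simp add: is_IA_def)
    show "ia_equiv t u" unfolding ia_equiv_def using lu lt udt k by (auto intro!: exI[of _ k])
    show "coal n (xs ! 0) u = coal n y t" using xs0 cuC C_def by simp
  next
    fix i assume i: "i \<in> {2..s}"
    have "i - 1 < s" using i by auto
    then have "xs ! (i - 1) = x1 + S u (i - 1)" using xs by (simp del: One_nat_def)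
    moreover have "S u (i - 1) = (\<Sum>k<i - 1. u ! k) + (i - 1)"
      unfolding S_def sum.distrib by simp
    ultimately have e1: "int (xs ! (i - 1)) = int x1 + int (\<Sum>k<i - 1. u ! k) + int (i - 1)"
      by (simp only: of_nat_add)
    have e2: "int (i - 1) = int i - 1" using i by auto
    have e3: "int (\<Sum>k<i - 1. u ! k) = (\<Sum>k<i - 1. int (u ! k))" by (rule of_nat_sum)
    have "int (xs ! (i - 1)) = int x1 + (\<Sum>k<i - 1. int (u ! k)) + int i - 1"
      unfolding e1 e2 e3 by simp
    then show "int (xs ! (i - 1)) \<in>
              {int (xs ! 0) + (\<Sum>k<i - 1. int (u ! k)) + int i - 1,
               int (xs ! 0) + (\<Sum>k<i - 1. int (u ! k)) + int i - 1 - int n}"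
      using xs0 by simp
  qed
qed

end
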